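(* Let $\pi_2$ be the five-dimensional complex associative algebra with basis $e_1,\dots,e_5$ and nonzero products $e_1e_1=e_2$, $e_1e_2=e_2e_1=e_3$, $e_1e_4=e_4e_1=e_5$, $e_4e_4=e_5$ (all other products of basis elements are zero). The group $LocAut(\pi_2)$ of all local automorphisms of $\pi_2$ is a Lie group.
   Context: An automorphism is a bijective linear map $\Phi$ with $\Phi(xy)=\Phi(x)\Phi(y)$; a linear map $\Phi$ is a local automorphism if for every $\nu$ there is an automorphism $\varphi_\nu$ with $\Phi(\nu)=\varphi_\nu(\nu)$. Local automorphisms of a finite-dimensional algebra form a group under composition; $LocAut(\pi_2)$ is regarded as a set of $5\times 5$ matrices (with respect to the basis $e_1,\dots,e_5$). *)

theory Defs
  imports "HOL-Analysis.Analysis"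
begin

text \<open>Vectors of pi_2 are elements of complex^5; the basis vector e_k is the k-th
  coordinate vector, coordinates indexed by the numerals 1,2,3,4,5 of type 5
  (note that 5 = 0 in type 5, which is harmless: it is just the fifth index).\<close>

definition basis5 :: "5 \<Rightarrow> complex ^ 5" where
  "basis5 k = (\<chi> i. if i = k then 1 else 0)"

definition pi2_table :: "5 \<Rightarrow> 5 \<Rightarrow> complex ^ 5" where
  "pi2_table i j =
     (if i = 1 \<and> j = 1 then basis5 2
      else if (i = 1 \<and> j = 2) \<or> (i = 2 \<and> j = 1) then basis5 3
      else if (i = 1 \<and> j = 4) \<or> (i = 4 \<and> j = 1) then basis5 5
      else if i = 4 \<and> j = 4 then basis5 5
      else 0)"

definition pi2_mult :: "complex ^ 5 \<Rightarrow> complex ^ 5 \<Rightarrow> complex ^ 5" where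
  "pi2_mult x y = (\<Sum>i\<in>UNIV. \<Sum>j\<in>UNIV. (x $ i * y $ j) *s pi2_table i j)"

definition is_automorphism :: "complex ^ 5 ^ 5 \<Rightarrow> bool" where
  "is_automorphism A \<longleftrightarrow> invertible A \<and>
     (\<forall>x y. A *v pi2_mult x y = pi2_mult (A *v x) (A *v y))"

definition is_local_automorphism :: "complex ^ 5 ^ 5 \<Rightarrow> bool" where
  "is_local_automorphism A \<longleftrightarrow>
     (\<forall>v. \<exists>\<phi>. is_automorphism \<phi> \<and> A *v v = \<phi> *v v)"

definition LocAut_pi2 :: "(complex ^ 5 ^ 5) set" where
  "LocAut_pi2 = {A. is_local_automorphism A}"

text \<open>Matrix Lie group (B. Hall, Lie Groups, Lie Algebras and Representations, Def. 1.4):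
  a subgroup G of GL(n,C) that is closed in GL(n,C), i.e. every limit of a sequence in G
  is either in G or not invertible.\<close>
definition matrix_Lie_group :: "(complex ^ 'n ^ 'n) set \<Rightarrow> bool" where
  "matrix_Lie_group G \<longleftrightarrow>
     G \<subseteq> {A. invertible A} \<and> mat 1 \<in> G \<and>
     (\<forall>A\<in>G. \<forall>B\<in>G. A ** B \<in> G) \<and> (\<forall>A\<in>G. matrix_inv A \<in> G) \<and>
     (\<forall>X A. (\<forall>m. X m \<in> G) \<longrightarrow> X \<longlonglongrightarrow> A \<longrightarrow> invertible A \<longrightarrow> A \<in> G)"

end

theory Submission imports Defs begin
lemma U5: "(UNIV::5 set) = {1,2,3,4,5}"
proof -
  have "card {1,2,3,4,5::5} = 5" by simp
  moreover have "card (UNIV::5 set) = 5" by simp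
  ultimately show ?thesis by (metis card_subset_eq finite subset_UNIV)
qed
lemma S5: "(\<Sum>i\<in>(UNIV::5 set). f i) = f 1 + f 2 + f 3 + f 4 + f 5"
  unfolding U5 by (simp add: add.assoc)
lemma A5: "(\<forall>i::5. P i) \<longleftrightarrow> P 1 \<and> P 2 \<and> P 3 \<and> P 4 \<and> P 5"
proof
  assume H: "P 1 \<and> P 2 \<and> P 3 \<and> P 4 \<and> P 5"
  show "\<forall>i. P i"
  proof
    fix i :: 5
    have "i \<in> {1,2,3,4,5}" by (simp only: U5[symmetric] UNIV_I)
    then show "P i" using H by auto
  qed
qed simp

lemma vec5_eq: "(x::'a^5) = y \<longleftrightarrow> x$1 = y$1 \<and> x$2 = y$2 \<and> x$3 = y$3 \<and> x$4 = y$4 \<and> x$5 = y$5"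
  by (simp add: vec_eq_iff A5)

lemma mv5: "((A::complex^5^5) *v x) $ i = A$i$1 * x$1 + A$i$2 * x$2 + A$i$3 * x$3 + A$i$4 * x$4 + A$i$5 * x$5"
  by (simp add: matrix_vector_mult_def S5)

lemma ptab: "pi2_table i j $ k = (if k = 2 \<and> i = 1 \<and> j = 1 then 1
   else if k = 3 \<and> ((i = 1 \<and> j = 2) \<or> (i = 2 \<and> j = 1)) then 1
   else if k = 5 \<and> ((i = 1 \<and> j = 4) \<or> (i = 4 \<and> j = 1) \<or> (i = 4 \<and> j = 4)) then 1 else 0)"
  unfolding pi2_table_def basis5_def by auto

lemma pm_c: "pi2_mult x y $ k = (\<Sum>i\<in>UNIV. \<Sum>j\<in>UNIV. x $ i * y $ j * pi2_table i j $ k)"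
  unfolding pi2_mult_def by (simp add: sum_component)

lemma pm: "pi2_mult x y $ 1 = 0" "pi2_mult x y $ 2 = x$1*y$1" "pi2_mult x y $ 3 = x$1*y$2+x$2*y$1"
   "pi2_mult x y $ 4 = 0" "pi2_mult x y $ 5 = x$1*y$4+x$4*y$1+x$4*y$4"
  by (simp_all only: pm_c S5 ptab) simp_all

definition idx :: "5 \<Rightarrow> nat" where
  "idx i = (if i = 1 then 0 else if i = 2 then 1 else if i = 3 then 2 else if i = 4 then 3 else 4)"
definition M5 :: "complex list list \<Rightarrow> complex^5^5" where
  "M5 L = (\<chi> i j. L ! idx i ! idx j)"

definition autm :: "complex \<Rightarrow> complex \<Rightarrow> complex \<Rightarrow> complex \<Rightarrow> complex \<Rightarrow> complex \<Rightarrow> complex \<Rightarrow> complex^5^5" where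
  "autm a1 a2 a3 a4 a5 b3 b5 = M5 [[a1,0,0,0,0],[a2,a1^2,0,0,0],[a3,2*a1*a2,a1^3,b3,0],
     [a4,0,0,a1+a4,0],[a5,2*a1*a4+a4^2,0,b5,(a1+a4)^2]]"

lemma inv_of_inj:
  fixes A :: "complex^5^5"
  assumes "\<And>x. A *v x = 0 \<Longrightarrow> x = 0"
  shows "invertible A"
proof -
  have "inj ((*v) A)"
  proof (rule injI)
    fix x y assume "A *v x = A *v y"
    then have "A *v (x - y) = 0" by (simp add: matrix_vector_mult_diff_distrib)
    then show "x = y" using assms[of "x - y"] by simp
  qed
  then show ?thesis using matrix_left_invertible_injective invertible_left_inverse by blast
qed

lemma autm_aut:
  assumes "a1 \<noteq> 0" "a1 + a4 \<noteq> 0"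
  shows "is_automorphism (autm a1 a2 a3 a4 a5 b3 b5)"
  unfolding is_automorphism_def
proof
  show "invertible (autm a1 a2 a3 a4 a5 b3 b5)"
  proof (rule inv_of_inj)
    fix x assume "autm a1 a2 a3 a4 a5 b3 b5 *v x = 0"
    then have e: "(autm a1 a2 a3 a4 a5 b3 b5 *v x) $ k = 0" for k by simp
    from e[of 1] have 1: "x$1 = 0" using assms by (simp add: mv5 autm_def M5_def idx_def)
    from e[of 2] 1 have 2: "x$2 = 0" using assms by (simp add: mv5 autm_def M5_def idx_def)
    from e[of 4] 1 have 4: "x$4 = 0" using assms by (simp add: mv5 autm_def M5_def idx_def)
    from e[of 3] 1 2 4 have 3: "x$3 = 0" using assms by (simp add: mv5 autm_def M5_def idx_def)
    from e[of 5] 1 2 4 have 5: "x$5 = 0" using assms by (simp add: mv5 autm_def M5_def idx_def)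
    show "x = 0" using 1 2 3 4 5 by (simp add: vec5_eq)
  qed
  show "\<forall>x y. autm a1 a2 a3 a4 a5 b3 b5 *v pi2_mult x y =
          pi2_mult (autm a1 a2 a3 a4 a5 b3 b5 *v x) (autm a1 a2 a3 a4 a5 b3 b5 *v y)"
    by (simp add: vec5_eq mv5 pm autm_def M5_def idx_def; simp add: algebra_simps power2_eq_square power3_eq_cube)
qed

lemma colb: "((A::complex^5^5) *v basis5 j) $ i = A$i$j"
  by (simp add: matrix_vector_mult_def basis5_def if_distrib cong: if_cong)

lemma aut_form:
  assumes "is_automorphism F"
  shows "F = autm (F$1$1) (F$2$1) (F$3$1) (F$4$1) (F$5$1) (F$3$4) (F$5$4) \<and> F$1$1 \<noteq> 0 \<and> F$1$1 + F$4$1 \<noteq> 0"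
proof -
  have inv: "invertible F" and hom: "\<And>x y. F *v pi2_mult x y = pi2_mult (F *v x) (F *v y)"
    using assms unfolding is_automorphism_def by auto
  have H: "F *v pi2_mult (basis5 i) (basis5 j) = pi2_mult (F *v basis5 i) (F *v basis5 j)" for i j
    using hom by blast
  have injF: "F *v x = 0 \<Longrightarrow> x = 0" for x
    using inj_matrix_vector_mult[OF inv] by (metis injD matrix_vector_mult_0_right)
  have h11: "F$1$2 = 0 \<and> F$2$2 = F$1$1 ^2 \<and> F$3$2 = 2*F$1$1*F$2$1 \<and> F$4$2 = 0 \<and> F$5$2 = 2*F$1$1*F$4$1 + F$4$1^2"
    using H[of 1 1] by (simp add: vec5_eq mv5 pm colb; simp add: basis5_def algebra_simps power2_eq_square)
  have h12: "F$1$3 = 0 \<and> F$2$3 = 0 \<and> F$3$3 = F$1$1 ^3 \<and> F$4$3 = 0 \<and> F$5$3 = 0"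
    using H[of 1 2] h11 by (simp add: vec5_eq mv5 pm colb; simp add: basis5_def algebra_simps power2_eq_square power3_eq_cube)
  have h44: "F$1$5 = 0 \<and> F$2$5 = F$1$4 ^2 \<and> F$3$5 = 2*F$1$4*F$2$4 \<and> F$4$5 = 0 \<and> F$5$5 = 2*F$1$4*F$4$4 + F$4$4^2"
    using H[of 4 4] by (simp add: vec5_eq mv5 pm colb; simp add: basis5_def algebra_simps power2_eq_square)
  have h45: "F$1$4 ^ 3 = 0"
    using H[of 4 5] h44 by (simp add: vec5_eq mv5 pm colb; simp add: basis5_def algebra_simps power2_eq_square power3_eq_cube)
  then have b1: "F$1$4 = 0" by simp
  have h14: "F$1$1 * F$2$4 = 0 \<and> (F$1$1 + F$4$1) * F$4$4 = F$4$4^2"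
    using H[of 1 4] h44 b1 by (simp add: vec5_eq mv5 pm colb; simp add: basis5_def algebra_simps power2_eq_square)
  have a1: "F$1$1 \<noteq> 0"
  proof
    assume "F$1$1 = 0"
    then have "F *v basis5 3 = 0" using h12 by (simp add: vec5_eq colb)
    then have "basis5 3 = 0" by (rule injF)
    then show False by (simp add: vec5_eq basis5_def)
  qed
  have b4: "F$4$4 \<noteq> 0"
  proof
    assume "F$4$4 = 0"
    then have "F *v basis5 5 = 0" using h44 b1 by (simp add: vec5_eq colb)
    then have "basis5 5 = 0" by (rule injF)
    then show False by (simp add: vec5_eq basis5_def)
  qed
  have b2: "F$2$4 = 0" using h14 a1 by simp
  have b4e: "F$4$4 = F$1$1 + F$4$1" using h14 b4 by (simp add: power2_eq_square)
  show ?thesis using a1 b4 b4e b1 b2 h11 h12 h44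
    by (simp add: vec_eq_iff A5 autm_def M5_def idx_def)
qed

definition PP :: "complex^5^5 \<Rightarrow> bool" where
  "PP A \<longleftrightarrow> A$1$2 = 0 \<and> A$1$3 = 0 \<and> A$1$4 = 0 \<and> A$1$5 = 0 \<and>
     A$2$3 = 0 \<and> A$2$4 = 0 \<and> A$2$5 = 0 \<and> A$3$5 = 0 \<and>
     A$4$2 = 0 \<and> A$4$3 = 0 \<and> A$4$5 = 0 \<and> A$5$3 = 0 \<and>
     A$4$4 = A$1$1 + A$4$1 \<and> A$5$5 = A$2$2 + A$5$2 \<and>
     A$1$1 \<noteq> 0 \<and> A$2$2 \<noteq> 0 \<and> A$3$3 \<noteq> 0 \<and> A$4$4 \<noteq> 0 \<and> A$5$5 \<noteq> 0"

lemma loc_ex: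
  assumes "is_local_automorphism A"
  shows "\<exists>a1 a2 a3 a4 a5 b3 b5. a1 \<noteq> 0 \<and> a1 + a4 \<noteq> 0 \<and> A *v v = autm a1 a2 a3 a4 a5 b3 b5 *v v"
proof -
  obtain F where "is_automorphism F" "A *v v = F *v v"
    using assms unfolding is_local_automorphism_def by blast
  then show ?thesis using aut_form by metis
qed

lemma loc_PP:
  assumes "is_local_automorphism A"
  shows "PP A"
proof -
  note L = loc_ex[OF assms]
  obtain a1 a2 a3 a4 a5 b3 b5 where c1: "a1 \<noteq> 0" "a1 + a4 \<noteq> 0" "A *v basis5 1 = autm a1 a2 a3 a4 a5 b3 b5 *v basis5 1"
    using L by blast
  then have r1: "A$1$1 \<noteq> 0 \<and> A$1$1 + A$4$1 \<noteq> 0"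
    by (simp add: vec5_eq colb autm_def M5_def idx_def)
  obtain a1 a2 a3 a4 a5 b3 b5 where c2: "a1 \<noteq> 0" "a1 + a4 \<noteq> 0" "A *v basis5 2 = autm a1 a2 a3 a4 a5 b3 b5 *v basis5 2"
    using L by blast
  then have "A$1$2 = 0 \<and> A$4$2 = 0 \<and> A$2$2 = a1^2 \<and> A$2$2 + A$5$2 = (a1+a4)^2"
    by (simp add: vec5_eq colb autm_def M5_def idx_def power2_eq_square algebra_simps)
  then have r2: "A$1$2 = 0 \<and> A$4$2 = 0 \<and> A$2$2 \<noteq> 0 \<and> A$2$2 + A$5$2 \<noteq> 0"
    using c2 by (metis power_not_zero)
  obtain a1 a2 a3 a4 a5 b3 b5 where c3: "a1 \<noteq> 0" "a1 + a4 \<noteq> 0" "A *v basis5 3 = autm a1 a2 a3 a4 a5 b3 b5 *v basis5 3"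
    using L by blast
  then have r3: "A$1$3 = 0 \<and> A$2$3 = 0 \<and> A$4$3 = 0 \<and> A$5$3 = 0 \<and> A$3$3 \<noteq> 0"
    by (simp add: vec5_eq colb autm_def M5_def idx_def)
  obtain a1 a2 a3 a4 a5 b3 b5 where c4: "a1 \<noteq> 0" "a1 + a4 \<noteq> 0" "A *v basis5 4 = autm a1 a2 a3 a4 a5 b3 b5 *v basis5 4"
    using L by blast
  then have r4: "A$1$4 = 0 \<and> A$2$4 = 0 \<and> A$4$4 \<noteq> 0"
    by (simp add: vec5_eq colb autm_def M5_def idx_def)
  obtain a1 a2 a3 a4 a5 b3 b5 where c5: "a1 \<noteq> 0" "a1 + a4 \<noteq> 0" "A *v basis5 5 = autm a1 a2 a3 a4 a5 b3 b5 *v basis5 5"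
    using L by blast
  then have r5: "A$1$5 = 0 \<and> A$2$5 = 0 \<and> A$3$5 = 0 \<and> A$4$5 = 0 \<and> A$5$5 \<noteq> 0"
    by (simp add: vec5_eq colb autm_def M5_def idx_def)
  obtain a1 a2 a3 a4 a5 b3 b5 where c6: "A *v (basis5 1 - basis5 4) = autm a1 a2 a3 a4 a5 b3 b5 *v (basis5 1 - basis5 4)"
    using L by blast
  then have "A$1$1 - A$1$4 = a1 \<and> A$4$1 - A$4$4 = a4 - (a1 + a4)"
    by (simp add: vec5_eq mv5 autm_def M5_def idx_def basis5_def)
  then have r6: "A$4$4 = A$1$1 + A$4$1" using r4 by (simp add: algebra_simps)
  obtain a1 a2 a3 a4 a5 b3 b5 where c7: "A *v (basis5 2 - basis5 5) = autm a1 a2 a3 a4 a5 b3 b5 *v (basis5 2 - basis5 5)"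
    using L by blast
  then have "A$2$2 - A$2$5 = a1^2 \<and> A$5$2 - A$5$5 = (2*a1*a4+a4^2) - (a1 + a4)^2"
    by (simp add: vec5_eq mv5 autm_def M5_def idx_def basis5_def)
  then have r7: "A$5$5 = A$2$2 + A$5$2" using r5 by (simp add: algebra_simps power2_eq_square)
  show ?thesis unfolding PP_def using r1 r2 r3 r4 r5 r6 r7 by simp
qed

lemma mk_loc:
  assumes "a1 \<noteq> 0" "a1 + a4 \<noteq> 0" "A *v v = autm a1 a2 a3 a4 a5 b3 b5 *v v"
  shows "\<exists>F. is_automorphism F \<and> A *v v = F *v v"
  using autm_aut[OF assms(1,2)] assms(3) by blast

lemma cube_root: "\<exists>r::complex. r ^ 3 = z \<and> (z \<noteq> 0 \<longrightarrow> r \<noteq> 0)"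
proof (cases "z = 0")
  case True then show ?thesis by auto
next
  case False
  have "exp (Ln z / 3) ^ 3 = exp (of_nat 3 * (Ln z / 3))" by (metis exp_of_nat_mult)
  also have "\<dots> = z" using False by simp
  finally show ?thesis by auto
qed

lemma PP_loc:
  assumes P: "PP A"
  shows "is_local_automorphism A"
  unfolding is_local_automorphism_def
proof
  fix v :: "complex^5"
  have z: "A$1$2 = 0" "A$1$3 = 0" "A$1$4 = 0" "A$1$5 = 0"
     "A$2$3 = 0" "A$2$4 = 0" "A$2$5 = 0" "A$3$5 = 0"
     "A$4$2 = 0" "A$4$3 = 0" "A$4$5 = 0" "A$5$3 = 0"
     and e44: "A$4$4 = A$1$1 + A$4$1" and e55: "A$5$5 = A$2$2 + A$5$2"
     and nz: "A$1$1 \<noteq> 0" "A$2$2 \<noteq> 0" "A$3$3 \<noteq> 0" "A$4$4 \<noteq> 0" "A$5$5 \<noteq> 0"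
    using P unfolding PP_def by auto
  show "\<exists>F. is_automorphism F \<and> A *v v = F *v v"
  proof (cases "v$1 = 0")
    case False
    define a1 where "a1 = A$1$1"
    define a4 where "a4 = A$4$1"
    define a2 where "a2 = A$2$1 + (A$2$2 - a1^2) * v$2 / v$1"
    define a3 where "a3 = (A$3$1 * v$1 + A$3$2 * v$2 + A$3$3 * v$3 + A$3$4 * v$4 - 2 * v$2*a1*a2 - v$3*a1^3) / v$1"
    define a5 where "a5 = (A$5$1 * v$1 + A$5$2 * v$2 + A$5$4 * v$4 + A$5$5 * v$5 - v$2*(2*a1*a4+a4^2) - v$5*(a1+a4)^2) / v$1"
    show ?thesis
    proof (rule mk_loc[of a1 a4 A v a2 a3 a5 0 0])
      show "a1 \<noteq> 0" "a1 + a4 \<noteq> 0" using nz e44 by (auto simp: a1_def a4_def)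
      show "A *v v = autm a1 a2 a3 a4 a5 0 0 *v v"
        using False z e44 by (simp add: vec5_eq mv5 autm_def M5_def idx_def a2_def a3_def a5_def a1_def a4_def field_simps)
    qed
  next
    case v1: True
    show ?thesis
    proof (cases "v$4 = 0")
      case False
      define a1 where "a1 = csqrt (A$2$2)"
      define a4 where "a4 = A$4$4 - a1"
      define b3 where "b3 = (A$3$2 * v$2 + A$3$3 * v$3 + A$3$4 * v$4 - v$3*a1^3) / v$4"
      define b5 where "b5 = (A$5$2 * v$2 + A$5$4 * v$4 + A$5$5 * v$5 - v$2*(2*a1*a4+a4^2) - v$5*(a1+a4)^2) / v$4"
      have sq: "a1^2 = A$2$2" by (simp add: a1_def)
      show ?thesis
      proof (rule mk_loc[of a1 a4 A v 0 0 0 b3 b5])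
        show "a1 \<noteq> 0" "a1 + a4 \<noteq> 0" using nz by (auto simp: a1_def a4_def)
        show "A *v v = autm a1 0 0 a4 0 b3 b5 *v v"
          using False v1 z sq by (simp add: vec5_eq mv5 autm_def M5_def idx_def b3_def b5_def a4_def field_simps)
      qed
    next
      case v4: True
      show ?thesis
      proof (cases "v$2 = 0")
        case False
        define a1 where "a1 = csqrt (A$2$2)"
        define c where "c = csqrt (A$5$5)"
        define a4 where "a4 = c - a1"
        define a2 where "a2 = (A$3$2 * v$2 + A$3$3 * v$3 - v$3*a1^3) / (2 * v$2*a1)"
        have sq: "a1^2 = A$2$2" by (simp add: a1_def)
        have sq5: "c^2 = A$5$5" by (simp add: c_def)
        have a1nz: "a1 \<noteq> 0" using nz by (auto simp: a1_def)
        show ?thesis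
        proof (rule mk_loc[of a1 a4 A v a2 0 0 0 0])
          show "a1 \<noteq> 0" "a1 + a4 \<noteq> 0" using nz a1nz by (auto simp: c_def a4_def)
          have ac: "a1 + a4 = c" by (simp add: a4_def)
          have "v$2*(2*a1*a4+a4^2) = v$2 * (c^2 - a1^2)" by (simp add: a4_def algebra_simps power2_eq_square)
          then show "A *v v = autm a1 a2 0 a4 0 0 0 *v v"
            using False v1 v4 z sq sq5 e55 a1nz ac by (simp add: vec5_eq mv5 autm_def M5_def idx_def a2_def field_simps)
        qed
      next
        case v2: True
        obtain a1 where r: "a1^3 = A$3$3" "a1 \<noteq> 0" using cube_root[of "A$3$3"] nz by auto
        define c where "c = csqrt (A$5$5)"
        define a4 where "a4 = c - a1"
        have sq5: "c^2 = A$5$5" by (simp add: c_def)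
        show ?thesis
        proof (rule mk_loc[of a1 a4 A v 0 0 0 0 0])
          show "a1 \<noteq> 0" "a1 + a4 \<noteq> 0" using nz r by (auto simp: c_def a4_def)
          show "A *v v = autm a1 0 0 a4 0 0 0 *v v"
            using v2 v1 v4 z r sq5 by (simp add: vec5_eq mv5 autm_def M5_def idx_def a4_def)
        qed
      qed
    qed
  qed
qed

lemma mm5: "((A::complex^5^5) ** B) $ i $ j = A$i$1 * B$1$j + A$i$2 * B$2$j + A$i$3 * B$3$j + A$i$4 * B$4$j + A$i$5 * B$5$j"
  by (simp add: matrix_matrix_mult_def S5)

lemma mat5_eq: "(X::complex^5^5) = Y \<longleftrightarrow> (\<forall>i j. X$i$j = Y$i$j)"
  by (simp add: vec_eq_iff)

lemma mat1_c: "(mat 1 :: complex^5^5) $ i $ j = (if i = j then 1 else 0)"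
  by (simp add: mat_def)

definition invM :: "complex^5^5 \<Rightarrow> complex^5^5" where
  "invM A = (let b11 = 1 / A$1$1; b21 = - A$2$1 / (A$1$1 * A$2$2); b41 = - A$4$1 / (A$1$1 * A$4$4) in
    M5 [[b11, 0, 0, 0, 0],
        [b21, 1 / A$2$2, 0, 0, 0],
        [- (A$3$1 * b11 + A$3$2 * b21 + A$3$4 * b41) / A$3$3, - A$3$2 / (A$2$2 * A$3$3), 1 / A$3$3, - A$3$4 / (A$3$3 * A$4$4), 0],
        [b41, 0, 0, 1 / A$4$4, 0],
        [- (A$5$1 * b11 + A$5$2 * b21 + A$5$4 * b41) / A$5$5, - A$5$2 / (A$2$2 * A$5$5), 0, - A$5$4 / (A$4$4 * A$5$5), 1 / A$5$5]])"

lemma PP_D: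
  assumes "PP A"
  shows "A$1$2 = 0" "A$1$3 = 0" "A$1$4 = 0" "A$1$5 = 0"
     "A$2$3 = 0" "A$2$4 = 0" "A$2$5 = 0" "A$3$5 = 0"
     "A$4$2 = 0" "A$4$3 = 0" "A$4$5 = 0" "A$5$3 = 0"
     "A$4$4 = A$1$1 + A$4$1" "A$5$5 = A$2$2 + A$5$2"
     "A$1$1 \<noteq> 0" "A$2$2 \<noteq> 0" "A$3$3 \<noteq> 0" "A$4$4 \<noteq> 0" "A$5$5 \<noteq> 0"
  using assms unfolding PP_def by auto

lemma invM_c:
  "invM A $ 1 $ 1 = 1 / A$1$1" "invM A $ 1 $ 2 = 0" "invM A $ 1 $ 3 = 0" "invM A $ 1 $ 4 = 0" "invM A $ 1 $ 5 = 0"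
  "invM A $ 2 $ 1 = - A$2$1 / (A$1$1 * A$2$2)" "invM A $ 2 $ 2 = 1 / A$2$2" "invM A $ 2 $ 3 = 0" "invM A $ 2 $ 4 = 0" "invM A $ 2 $ 5 = 0"
  "invM A $ 3 $ 1 = - (A$3$1 * (1 / A$1$1) + A$3$2 * (- A$2$1 / (A$1$1 * A$2$2)) + A$3$4 * (- A$4$1 / (A$1$1 * A$4$4))) / A$3$3"
  "invM A $ 3 $ 2 = - A$3$2 / (A$2$2 * A$3$3)" "invM A $ 3 $ 3 = 1 / A$3$3" "invM A $ 3 $ 4 = - A$3$4 / (A$3$3 * A$4$4)" "invM A $ 3 $ 5 = 0"
  "invM A $ 4 $ 1 = - A$4$1 / (A$1$1 * A$4$4)" "invM A $ 4 $ 2 = 0" "invM A $ 4 $ 3 = 0" "invM A $ 4 $ 4 = 1 / A$4$4" "invM A $ 4 $ 5 = 0"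
  "invM A $ 5 $ 1 = - (A$5$1 * (1 / A$1$1) + A$5$2 * (- A$2$1 / (A$1$1 * A$2$2)) + A$5$4 * (- A$4$1 / (A$1$1 * A$4$4))) / A$5$5"
  "invM A $ 5 $ 2 = - A$5$2 / (A$2$2 * A$5$5)" "invM A $ 5 $ 3 = 0" "invM A $ 5 $ 4 = - A$5$4 / (A$4$4 * A$5$5)" "invM A $ 5 $ 5 = 1 / A$5$5"
  unfolding invM_def Let_def M5_def idx_def by simp_all

lemma PP_inv1:
  assumes "PP A"
  shows "A ** invM A = mat 1"
proof -
  note D = PP_D[OF assms]
  show ?thesis
    unfolding mat5_eq A5 using D(1-12) D(15-19)
    by (simp add: mm5 mat1_c invM_c field_simps)
qed

lemma inv_split:
  fixes a b c :: complex
  assumes "c = a + b" "a \<noteq> 0" "c \<noteq> 0"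
  shows "1 / c = 1 / a + - b / (a * c)"
proof -
  have "1 / a + - b / (a * c) = (c - b) / (a * c)" using assms(2,3) by (simp add: field_simps)
  also have "c - b = a" using assms(1) by simp
  also have "a / (a * c) = 1 / c" using assms(2,3) by simp
  finally show ?thesis by simp
qed

lemma PP_inv:
  assumes "PP A"
  shows "A ** invM A = mat 1" "invM A ** A = mat 1" "PP (invM A)"
proof -
  note D = PP_D[OF assms]
  show 1: "A ** invM A = mat 1" by (rule PP_inv1[OF assms])
  then show "invM A ** A = mat 1" using matrix_left_right_inverse by blast
  have h1: "1 / A$4$4 = 1 / A$1$1 + - A$4$1 / (A$1$1 * A$4$4)" using D(13,15,18) by (rule inv_split)
  have h2: "1 / A$5$5 = 1 / A$2$2 + - A$5$2 / (A$2$2 * A$5$5)" using D(14,16,19) by (rule inv_split)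
  have k1: "1 / A$1$1 + - A$4$1 / (A$1$1 * A$4$4) \<noteq> 0" unfolding h1[symmetric] using D(18) by simp
  have k2: "1 / A$2$2 + - A$5$2 / (A$2$2 * A$5$5) \<noteq> 0" unfolding h2[symmetric] using D(19) by simp
  show "PP (invM A)" unfolding PP_def invM_c using D(15-19) h1 h2 k1 k2 by simp
qed

lemma inv_eq:
  fixes A B :: "complex^5^5"
  assumes "A ** B = mat 1" "B ** A = mat 1"
  shows "matrix_inv A = B"
proof -
  have "A ** matrix_inv A = mat 1 \<and> matrix_inv A ** A = mat 1"
    unfolding matrix_inv_def by (rule someI[of _ B]) (use assms in auto)
  then have "matrix_inv A = (B ** A) ** matrix_inv A" using assms by simp
  also have "\<dots> = B" by (simp add: matrix_mul_assoc[symmetric] \<open>A ** matrix_inv A = mat 1 \<and> _\<close>)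
  finally show ?thesis .
qed

lemma PP_mult:
  assumes "PP A" "PP B"
  shows "PP (A ** B)"
proof -
  note a = PP_D[OF assms(1)] and b = PP_D[OF assms(2)]
  note zs = a(1-12) b(1-12)
  note ar = mult_zero_left mult_zero_right add_0_left add_0_right
  have d: "(A ** B)$1$1 = A$1$1 * B$1$1" "(A ** B)$2$2 = A$2$2 * B$2$2" "(A ** B)$3$3 = A$3$3 * B$3$3"
     "(A ** B)$4$4 = A$4$4 * B$4$4" "(A ** B)$5$5 = A$5$5 * B$5$5"
     "(A ** B)$4$1 = A$4$1 * B$1$1 + A$4$4 * B$4$1" "(A ** B)$5$2 = A$5$2 * B$2$2 + A$5$5 * B$5$2"
    using zs unfolding mm5 by (simp_all only: ar)
  have e1: "(A ** B)$4$4 = (A ** B)$1$1 + (A ** B)$4$1"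
    unfolding d(1,4,6) a(13) b(13) by (simp add: algebra_simps)
  have e2: "(A ** B)$5$5 = (A ** B)$2$2 + (A ** B)$5$2"
    unfolding d(2,5,7) a(14) b(14) by (simp add: algebra_simps)
  have n: "(A ** B)$1$1 \<noteq> 0" "(A ** B)$2$2 \<noteq> 0" "(A ** B)$3$3 \<noteq> 0"
     "(A ** B)$4$4 \<noteq> 0" "(A ** B)$5$5 \<noteq> 0"
    unfolding d(1-5) using a(15-19) b(15-19) by simp_all
  have z: "(A ** B)$1$2 = 0" "(A ** B)$1$3 = 0" "(A ** B)$1$4 = 0" "(A ** B)$1$5 = 0"
     "(A ** B)$2$3 = 0" "(A ** B)$2$4 = 0" "(A ** B)$2$5 = 0" "(A ** B)$3$5 = 0"
     "(A ** B)$4$2 = 0" "(A ** B)$4$3 = 0" "(A ** B)$4$5 = 0" "(A ** B)$5$3 = 0"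
    using zs unfolding mm5 by (simp_all only: ar)
  show ?thesis unfolding PP_def by (intro conjI z e1 e2 n)
qed

lemma PP_one: "PP (mat 1)"
  unfolding PP_def by (simp add: mat1_c)

lemma lim_entry:
  assumes "X \<longlonglongrightarrow> (A::complex^5^5)"
  shows "(\<lambda>m. X m $ i $ j) \<longlonglongrightarrow> A $ i $ j"
  by (intro tendsto_vec_nth assms)

lemma lim_zero:
  assumes "X \<longlonglongrightarrow> (A::complex^5^5)" "\<And>m. X m $ i $ j = 0"
  shows "A $ i $ j = 0"
proof -
  have "(\<lambda>m. X m $ i $ j) \<longlonglongrightarrow> A $ i $ j" by (rule lim_entry[OF assms(1)])
  then have "(\<lambda>m. 0::complex) \<longlonglongrightarrow> A $ i $ j" using assms(2) by simp
  then show ?thesis using LIMSEQ_unique tendsto_const by metis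
qed

lemma lim_sum:
  assumes "X \<longlonglongrightarrow> (A::complex^5^5)" "\<And>m. X m $ i $ j = X m $ k $ l + X m $ p $ q"
  shows "A $ i $ j = A $ k $ l + A $ p $ q"
proof -
  have "(\<lambda>m. X m $ i $ j) \<longlonglongrightarrow> A $ i $ j" by (rule lim_entry[OF assms(1)])
  moreover have "(\<lambda>m. X m $ i $ j) \<longlonglongrightarrow> A $ k $ l + A $ p $ q"
    unfolding assms(2) by (intro tendsto_add lim_entry[OF assms(1)])
  ultimately show ?thesis using LIMSEQ_unique by blast
qed

lemma pattern_inv_nz:
  fixes A :: "complex^5^5"
  assumes "invertible A" and z: "A$1$2 = 0" "A$1$3 = 0" "A$1$4 = 0" "A$1$5 = 0"
     "A$2$3 = 0" "A$2$4 = 0" "A$2$5 = 0" "A$3$5 = 0"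
     "A$4$2 = 0" "A$4$3 = 0" "A$4$5 = 0" "A$5$3 = 0"
  shows "A$1$1 \<noteq> 0 \<and> A$2$2 \<noteq> 0 \<and> A$3$3 \<noteq> 0 \<and> A$4$4 \<noteq> 0 \<and> A$5$5 \<noteq> 0"
proof -
  obtain B where AB: "A ** B = mat 1" and BA: "B ** A = mat 1" using assms(1) unfolding invertible_def by blast
  have ab: "(A ** B) $ i $ j = (if i = j then 1 else 0)" for i j using AB by (simp add: mat1_c)
  have ba: "(B ** A) $ i $ j = (if i = j then 1 else 0)" for i j using BA by (simp add: mat1_c)
  have 11: "A$1$1 * B$1$1 = 1" using ab[of 1 1] z by (simp add: mm5)
  have 12: "A$1$1 * B$1$2 = 0" using ab[of 1 2] z by (simp add: mm5)
  have 22: "A$2$1 * B$1$2 + A$2$2 * B$2$2 = 1" using ab[of 2 2] z by (simp add: mm5)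
  have 33: "B$3$3 * A$3$3 = 1" using ba[of 3 3] z by (simp add: mm5)
  have 55: "B$5$5 * A$5$5 = 1" using ba[of 5 5] z by (simp add: mm5)
  have 43: "B$4$3 * A$3$3 = 0" using ba[of 4 3] z by (simp add: mm5)
  have 45: "B$4$5 * A$5$5 = 0" using ba[of 4 5] z by (simp add: mm5)
  have 44: "B$4$3 * A$3$4 + B$4$4 * A$4$4 + B$4$5 * A$5$4 = 1" using ba[of 4 4] z by (simp add: mm5)
  have n1: "A$1$1 \<noteq> 0" using 11 by auto
  have "B$1$2 = 0" using 12 n1 by simp
  then have n2: "A$2$2 \<noteq> 0" using 22 by auto
  have n3: "A$3$3 \<noteq> 0" using 33 by auto
  have n5: "A$5$5 \<noteq> 0" using 55 by auto
  have "B$4$3 = 0" "B$4$5 = 0" using 43 45 n3 n5 by auto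
  then have n4: "A$4$4 \<noteq> 0" using 44 by auto
  show ?thesis using n1 n2 n3 n4 n5 by simp
qed

lemma PP_closed:
  assumes "\<And>m. PP (X m)" "X \<longlonglongrightarrow> A" "invertible A"
  shows "PP A"
proof -
  have zs: "A$1$2 = 0" "A$1$3 = 0" "A$1$4 = 0" "A$1$5 = 0"
     "A$2$3 = 0" "A$2$4 = 0" "A$2$5 = 0" "A$3$5 = 0"
     "A$4$2 = 0" "A$4$3 = 0" "A$4$5 = 0" "A$5$3 = 0"
    by (rule lim_zero[OF assms(2)]; use assms(1) in \<open>simp add: PP_def\<close>)+
  have "A$4$4 = A$1$1 + A$4$1"
    by (rule lim_sum[OF assms(2)]) (use assms(1) in \<open>simp add: PP_def\<close>)
  moreover have "A$5$5 = A$2$2 + A$5$2"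
    by (rule lim_sum[OF assms(2)]) (use assms(1) in \<open>simp add: PP_def\<close>)
  moreover note pattern_inv_nz[OF assms(3) zs]
  ultimately show ?thesis using zs unfolding PP_def by simp
qed

lemma LocAut_eq: "LocAut_pi2 = {A. PP A}"
  unfolding LocAut_pi2_def using loc_PP PP_loc by blast

theorem theorem7p5:
  shows "matrix_Lie_group LocAut_pi2"
  unfolding matrix_Lie_group_def LocAut_eq
proof (intro conjI ballI allI impI subsetI)
  fix A assume "A \<in> {A. PP A}"
  then show "A \<in> {A. invertible A}" using PP_inv[of A] unfolding invertible_def by blast
next
  show "mat 1 \<in> {A. PP A}" using PP_one by simp
next
  fix A B assume "A \<in> {A. PP A}" "B \<in> {A. PP A}"
  then show "A ** B \<in> {A. PP A}" using PP_mult by simp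
next
  fix A assume "A \<in> {A. PP A}"
  then have "PP A" by simp
  then show "matrix_inv A \<in> {A. PP A}" using PP_inv[of A] inv_eq by simp
next
  fix X A assume "\<forall>m. X m \<in> {A. PP A}" "X \<longlonglongrightarrow> A" "invertible A"
  then show "A \<in> {A. PP A}" using PP_closed[of X A] by simp
qed

end
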